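(* Let $\Lambda\in\mathbb{N}$ and let $k$ be a real number with $k\ge\Lambda^2(\Lambda+1)^2$. For $\alpha\in[0,2\pi)$ and $\beta=(\beta_{-\Lambda},\dots,\beta_\Lambda)\in\mathbb{R}^{2\Lambda+1}$ let $$\bm{\omega}_\alpha^\beta:=\sum_{m=-\Lambda}^{\Lambda}\frac{e^{i(\alpha m+\beta_m)}}{\sqrt{2\Lambda+1}}\psi_m,\qquad P_\alpha^\beta:=\bm{\omega}_\alpha^\beta\langle\bm{\omega}_\alpha^\beta,\cdot\rangle.$$ Then: (i) $I=\frac{2\Lambda+1}{2\pi}\int_0^{2\pi}d\alpha\,P_\alpha^\beta$ for every $\beta$; (ii) on every $\bm{\omega}_\alpha^\beta$, $\langle L\rangle=0$ and $(\Delta L)^2=\Lambda(\Lambda+1)/3$; (iii) for all $\alpha,\beta$, $(\Delta\bm{x})^2_{\bm{\omega}_\alpha^\beta}\ge(\Delta\bm{x})^2_{\bm{\omega}_\alpha^0}$, and $$(\Delta\bm{x})^2_{\bm{\omega}_\alpha^0}<\frac{1}{\Lambda+1}\left(\frac12+\frac{1}{3\Lambda}\right),$$ which is $\le \frac{2}{3(\Lambda+1)}$ when $\Lambda\ge2$.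
   Context: (Fuzzy circle $S^1_\Lambda$.) $\mathcal{H}_\Lambda$ is a $(2\Lambda+1)$-dimensional Hilbert space with orthonormal basis $\{\psi_n\}_{n=-\Lambda}^{\Lambda}$ (inner product antilinear in the first argument). Operators: $L\psi_n=n\psi_n$; $x_+\psi_n=b_{n+1}\psi_{n+1}$, $x_-\psi_n=b_n\psi_{n-1}$, where $b_n=\sqrt{1+n(n-1)/k}$ if $1-\Lambda\le n\le\Lambda$ and $b_n=0$ otherwise (so the undefined vectors $\psi_{\pm(\Lambda+1)}$ never occur with nonzero coefficient); $x_1=(x_++x_-)/2$, $x_2=(x_+-x_-)/(2i)$, $\bm{x}^2=x_1^2+x_2^2$. For a unit vector $\bm{\chi}$, $\langle A\rangle=\langle\bm{\chi},A\bm{\chi}\rangle$, $(\Delta L)^2=\langle L^2\rangle-\langle L\rangle^2$, and $(\Delta\bm{x})^2_{\bm\chi}=\langle\bm{x}^2\rangle-\langle x_1\rangle^2-\langle x_2\rangle^2$. *)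

theory Defs
  imports "HOL-Analysis.Analysis"
begin

text \<open>Fuzzy circle. A vector of the Hilbert space H_Lambda is represented by its
coefficient function c :: int => complex w.r.t. the orthonormal basis psi_n,
with c n = 0 for n outside {-Lambda..Lambda}.\<close>

type_synonym fvec = "int \<Rightarrow> complex"

definition hspace :: "nat \<Rightarrow> fvec set" where
  "hspace Lam = {v. \<forall>n. n \<notin> {- int Lam..int Lam} \<longrightarrow> v n = 0}"

definition psi :: "int \<Rightarrow> fvec" where
  "psi n = (\<lambda>m. if m = n then 1 else 0)"

definition finner :: "nat \<Rightarrow> fvec \<Rightarrow> fvec \<Rightarrow> complex" where
  "finner Lam u v = (\<Sum>n\<in>{- int Lam..int Lam}. cnj (u n) * v n)"

definition bcoef :: "nat \<Rightarrow> real \<Rightarrow> int \<Rightarrow> complex" where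
  "bcoef Lam k n = (if 1 - int Lam \<le> n \<and> n \<le> int Lam
      then complex_of_real (sqrt (1 + real_of_int (n * (n - 1)) / k)) else 0)"

definition Lop :: "fvec \<Rightarrow> fvec" where
  "Lop v = (\<lambda>m. of_int m * v m)"

text \<open>x_+ psi_n = b_{n+1} psi_{n+1}, i.e. the coefficient at m is b_m v_{m-1}\<close>
definition xplus :: "nat \<Rightarrow> real \<Rightarrow> fvec \<Rightarrow> fvec" where
  "xplus Lam k v = (\<lambda>m. bcoef Lam k m * v (m - 1))"

text \<open>x_- psi_n = b_n psi_{n-1}, i.e. the coefficient at m is b_{m+1} v_{m+1}\<close>
definition xminus :: "nat \<Rightarrow> real \<Rightarrow> fvec \<Rightarrow> fvec" where
  "xminus Lam k v = (\<lambda>m. bcoef Lam k (m + 1) * v (m + 1))"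

definition x1op :: "nat \<Rightarrow> real \<Rightarrow> fvec \<Rightarrow> fvec" where
  "x1op Lam k v = (\<lambda>m. (xplus Lam k v m + xminus Lam k v m) / 2)"

definition x2op :: "nat \<Rightarrow> real \<Rightarrow> fvec \<Rightarrow> fvec" where
  "x2op Lam k v = (\<lambda>m. (xplus Lam k v m - xminus Lam k v m) / (2 * \<i>))"

definition xsqop :: "nat \<Rightarrow> real \<Rightarrow> fvec \<Rightarrow> fvec" where
  "xsqop Lam k v = (\<lambda>m. x1op Lam k (x1op Lam k v) m + x2op Lam k (x2op Lam k v) m)"

definition expect :: "nat \<Rightarrow> (fvec \<Rightarrow> fvec) \<Rightarrow> fvec \<Rightarrow> complex" where
  "expect Lam A chi = finner Lam chi (A chi)"

definition varL :: "nat \<Rightarrow> fvec \<Rightarrow> complex" where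
  "varL Lam chi = expect Lam (\<lambda>v. Lop (Lop v)) chi - (expect Lam Lop chi)\<^sup>2"

definition varx :: "nat \<Rightarrow> real \<Rightarrow> fvec \<Rightarrow> complex" where
  "varx Lam k chi = expect Lam (xsqop Lam k) chi
      - (expect Lam (x1op Lam k) chi)\<^sup>2 - (expect Lam (x2op Lam k) chi)\<^sup>2"

definition omega :: "nat \<Rightarrow> real \<Rightarrow> (int \<Rightarrow> real) \<Rightarrow> fvec" where
  "omega Lam \<alpha> \<beta> = (\<lambda>m. if m \<in> {- int Lam..int Lam}
      then exp (\<i> * complex_of_real (\<alpha> * of_int m + \<beta> m)) / complex_of_real (sqrt (2 * real Lam + 1))
      else 0)"

definition Pproj :: "nat \<Rightarrow> real \<Rightarrow> (int \<Rightarrow> real) \<Rightarrow> fvec \<Rightarrow> fvec" where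
  "Pproj Lam \<alpha> \<beta> v = (\<lambda>m. omega Lam \<alpha> \<beta> m * finner Lam (omega Lam \<alpha> \<beta>) v)"

end

theory Submission
  imports Defs
begin


lemma int_ivl_Suc:
  "{- int (Suc n)..int (Suc n)} = insert (int n + 1) (insert (-(int n + 1)) {- int n..int n})"
  by auto

lemma sum_ivl_Suc:
  "(\<Sum>m\<in>{- int (Suc n)..int (Suc n)}. f m) = f (int n + 1) + f (-(int n + 1)) + (\<Sum>m\<in>{- int n..int n}. f m)"
  unfolding int_ivl_Suc by (simp add: add.assoc)

lemma sum_id_sym: "(\<Sum>m\<in>{- int n..int n}. m) = 0"
proof (induction n)
  case (Suc n) show ?case unfolding sum_ivl_Suc using Suc by simp
qed simp

lemma sum_sq_sym: "3 * (\<Sum>m\<in>{- int n..int n}. m^2) = int n * (int n + 1) * (2 * int n + 1)"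
proof (induction n)
  case (Suc n) show ?case unfolding sum_ivl_Suc distrib_left using Suc
    by (simp add: algebra_simps power2_eq_square)
qed simp

lemma cis_int_integral:
  fixes j :: int
  shows "((\<lambda>a. cis (a * of_int j)) has_integral (if j = 0 then complex_of_real (2*pi) else 0)) {0..2*pi}"
proof (cases "j = 0")
  case True
  then show ?thesis using has_integral_const_real[of "1::complex" 0 "2*pi"]
    by (simp add: scaleR_conv_of_real)
next
  case False
  define g where "g = (\<lambda>z::complex. exp (\<i> * z * of_int j) / (\<i> * of_int j))"
  have d: "((\<lambda>x. g (of_real x)) has_vector_derivative cis (x * of_int j)) (at x within {0..2*pi})" for x
  proof -
    have "(g has_field_derivative exp (\<i> * of_real x * of_int j)) (at (of_real x))"
      unfolding g_def using False
      by (auto intro!: derivative_eq_intros simp: field_simps)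
    then have "((\<lambda>x. g (of_real x)) has_vector_derivative exp (\<i> * of_real x * of_int j)) (at x)"
      by (rule has_vector_derivative_real_field)
    moreover have "exp (\<i> * of_real x * of_int j) = cis (x * of_int j)"
      by (simp add: cis_conv_exp mult_ac)
    ultimately show ?thesis by (metis has_vector_derivative_at_within)
  qed
  have "((\<lambda>a. cis (a * of_int j)) has_integral (g (of_real (2*pi)) - g (of_real 0))) {0..2*pi}"
    by (rule fundamental_theorem_of_calculus) (use d in auto)
  moreover have "g (of_real (2*pi)) - g (of_real 0) = 0"
  proof -
    have "exp (\<i> * of_real (2*pi) * of_int j) = cis (2 * pi * of_int j)"
      by (simp add: cis_conv_exp mult_ac)
    also have "\<dots> = 1" by (simp add: cis_multiple_2pi)
    finally show ?thesis by (simp add: g_def)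
  qed
  ultimately show ?thesis using False by simp
qed



abbreviation "R n \<equiv> {- int n..int n}"

lemma omega_in: "m \<in> R n \<Longrightarrow> omega n a b m = cis (a * of_int m + b m) / of_real (sqrt (2 * real n + 1))"
  unfolding omega_def cis_conv_exp by simp

lemma omega_out: "m \<notin> R n \<Longrightarrow> omega n a b m = 0"
  by (simp add: omega_def)

lemma om_prod:
  assumes "m \<in> R n" "m' \<in> R n"
  shows "cnj (omega n a b m) * omega n a b m' = cis ((a * of_int m' + b m') - (a * of_int m + b m)) / of_real (2 * real n + 1)"
proof -
  define C where "C = complex_of_real (sqrt (2 * real n + 1))"
  have s: "C * C = of_real (2 * real n + 1)"
  proof -
    have "sqrt (2 * real n + 1) * sqrt (2 * real n + 1) = 2 * real n + 1" by simp
    then show ?thesis unfolding C_def of_real_mult[symmetric] by (rule arg_cong)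
  qed
  have "cnj (omega n a b m) * omega n a b m' = (cis (- (a * of_int m + b m)) / C) * (cis (a * of_int m' + b m') / C)"
    using assms unfolding omega_in[OF assms(1)] omega_in[OF assms(2)] C_def[symmetric]
    by (simp only: complex_cnj_divide cis_cnj complex_cnj_complex_of_real C_def)
  also have "\<dots> = (cis (- (a * of_int m + b m)) * cis (a * of_int m' + b m')) / (C * C)"
    by simp
  also have "\<dots> = cis ((a * of_int m' + b m') - (a * of_int m + b m)) / of_real (2 * real n + 1)"
    by (simp only: cis_mult s diff_conv_add_uminus add.commute)
  finally show ?thesis .
qed

lemma om_sq: "m \<in> R n \<Longrightarrow> cnj (omega n a b m) * omega n a b m = 1 / of_real (2 * real n + 1)"
  using om_prod[of m n m a b] by simp

lemma om_sq': "m \<in> R n \<Longrightarrow> cnj (omega n a b m) * (z * omega n a b m) = z / of_real (2 * real n + 1)"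
  proof -
  assume m: "m \<in> R n"
  have "cnj (omega n a b m) * (z * omega n a b m) = z * (cnj (omega n a b m) * omega n a b m)"
    by (simp only: mult.left_commute)
  also have "\<dots> = z / of_real (2 * real n + 1)"
    by (simp only: om_sq[OF m]) simp
  finally show ?thesis .
qed

lemma expect_L: "expect n Lop (omega n a b) = 0"
proof -
  have "expect n Lop (omega n a b) = (\<Sum>m\<in>R n. of_int m / of_real (2 * real n + 1))"
    unfolding expect_def finner_def Lop_def
    by (rule sum.cong) (simp_all only: om_sq')
  also have "\<dots> = of_int (\<Sum>m\<in>R n. m) / of_real (2 * real n + 1)"
    by (simp add: sum_divide_distrib)
  finally show ?thesis by (simp add: sum_id_sym)
qed

lemma varL_om: "varL n (omega n a b) = of_real (real n * (real n + 1) / 3)"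
proof -
  have "expect n (\<lambda>v. Lop (Lop v)) (omega n a b) = (\<Sum>m\<in>R n. of_int (m^2) / of_real (2 * real n + 1))"
    unfolding expect_def finner_def Lop_def
    apply (rule sum.cong, rule refl)
    subgoal for x using om_sq'[of x n a b "of_int x * of_int x"] by (simp only: mult.assoc of_int_power power2_eq_square of_int_mult)
    done
  also have "\<dots> = of_int (\<Sum>m\<in>R n. m^2) / of_real (2 * real n + 1)"
    by (simp only: sum_divide_distrib of_int_sum)
  also have "\<dots> = of_real (real n * (real n + 1) / 3)"
  proof -
    have "real_of_int (\<Sum>m\<in>R n. m^2) = real n * (real n + 1) * (2 * real n + 1) / 3"
      using arg_cong[OF sum_sq_sym[of n], of real_of_int] by simp
    then have "complex_of_int (\<Sum>m\<in>R n. m^2) = of_real (real n * (real n + 1) * (2 * real n + 1) / 3)"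
      by (simp only: of_real_of_int_eq[where 'a=complex, symmetric])
    moreover have "real n * (real n + 1) * (2 * real n + 1) / 3 / (2 * real n + 1) = real n * (real n + 1) / 3"
      by (simp add: field_simps)
    ultimately show ?thesis by (simp only: of_real_divide[symmetric])

  qed
  finally show ?thesis unfolding varL_def expect_L by simp
qed



lemma term_eq:
  assumes m: "m \<in> R n" and j: "j \<in> R n"
  shows "complex_of_real ((2 * real n + 1) / (2 * pi)) * (omega n a b m * (cnj (omega n a b j) * v j))
       = (v j * cis (b m - b j) / of_real (2 * pi)) * cis (a * of_int (m - j))"
proof -
  have "omega n a b m * (cnj (omega n a b j) * v j) = (cnj (omega n a b j) * omega n a b m) * v j"
    by (simp only: mult_ac)
  also have "\<dots> = cis ((a * of_int m + b m) - (a * of_int j + b j)) / of_real (2 * real n + 1) * v j"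
    by (simp only: om_prod[OF j m])
  also have "cis ((a * of_int m + b m) - (a * of_int j + b j)) = cis (b m - b j) * cis (a * of_int (m - j))"
    by (simp only: cis_mult) (simp add: algebra_simps)
  finally have e: "omega n a b m * (cnj (omega n a b j) * v j) = cis (b m - b j) * cis (a * of_int (m - j)) / of_real (2 * real n + 1) * v j" .
  have nz: "complex_of_real (2 * real n + 1) \<noteq> 0" "complex_of_real (2 * pi) \<noteq> 0"
    by (simp_all only: of_real_eq_0_iff) (simp_all add: add_nonneg_eq_0_iff)
  have gen: "N \<noteq> 0 \<Longrightarrow> N / P * (A * B / N * V) = V * A / P * B" for N P A B V :: complex
    by (simp add: field_simps)
  show ?thesis unfolding e of_real_divide by (rule gen) (rule nz(1))
qed

lemma part1:
  assumes v: "v \<in> hspace n"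
  shows "((\<lambda>a. complex_of_real ((2 * real n + 1) / (2 * pi)) * Pproj n a b v m) has_integral v m) {0..2 * pi}"
proof (cases "m \<in> R n")
  case False
  then have "v m = 0" using v by (simp add: hspace_def)
  moreover have "Pproj n a b v m = 0" for a using False by (simp add: Pproj_def omega_out)
  ultimately show ?thesis by simp
next
  case m: True
  define c where "c j = v j * cis (b m - b j) / of_real (2 * pi)" for j
  have eq: "complex_of_real ((2 * real n + 1) / (2 * pi)) * Pproj n a b v m
      = (\<Sum>j\<in>R n. c j * cis (a * of_int (m - j)))" for a
  proof -
    have "complex_of_real ((2 * real n + 1) / (2 * pi)) * Pproj n a b v m
      = (\<Sum>j\<in>R n. complex_of_real ((2 * real n + 1) / (2 * pi)) * (omega n a b m * (cnj (omega n a b j) * v j)))"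
      unfolding Pproj_def finner_def by (simp only: sum_distrib_left)
    also have "\<dots> = (\<Sum>j\<in>R n. c j * cis (a * of_int (m - j)))"
      by (rule sum.cong[OF refl]) (simp only: term_eq[OF m] c_def)
    finally show ?thesis .
  qed
  have "((\<lambda>a. \<Sum>j\<in>R n. c j * cis (a * of_int (m - j))) has_integral
      (\<Sum>j\<in>R n. c j * (if m - j = 0 then complex_of_real (2*pi) else 0))) {0..2*pi}"
  proof (rule has_integral_sum)
    show "finite (R n)" by simp
    fix j assume "j \<in> R n"
    show "((\<lambda>a. c j * cis (a * of_int (m - j))) has_integral c j * (if m - j = 0 then complex_of_real (2*pi) else 0)) {0..2*pi}"
      by (rule has_integral_mult_right[OF cis_int_integral])
  qed
  moreover have "(\<Sum>j\<in>R n. c j * (if m - j = 0 then complex_of_real (2*pi) else 0)) = v m"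
  proof -
    have "(\<Sum>j\<in>R n. c j * (if m - j = 0 then complex_of_real (2*pi) else 0))
        = (\<Sum>j\<in>R n. if j = m then c j * complex_of_real (2*pi) else 0)"
      by (rule sum.cong) auto
    also have "\<dots> = c m * complex_of_real (2*pi)" using m by simp
    also have "\<dots> = v m" by (simp add: c_def)
    finally show ?thesis .
  qed
  ultimately show ?thesis unfolding eq by simp
qed



definition bb :: "nat \<Rightarrow> real \<Rightarrow> int \<Rightarrow> real" where
  "bb n k m = (if 1 - int n \<le> m \<and> m \<le> int n then sqrt (1 + real_of_int (m * (m - 1)) / k) else 0)"

lemma bcoef_bb: "bcoef n k m = complex_of_real (bb n k m)"
  by (simp add: bcoef_def bb_def)

lemma xsq_eq: "xsqop n k v m = (bcoef n k m ^ 2 + bcoef n k (m + 1) ^ 2) / 2 * v m"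
  unfolding xsqop_def x1op_def x2op_def xplus_def xminus_def
  by (simp add: field_simps power2_eq_square)

definition Ep where "Ep n k w = finner n w (xplus n k w)"
definition Em where "Em n k w = finner n w (xminus n k w)"

lemma expect_x1: "expect n (x1op n k) w = (Ep n k w + Em n k w) / 2"
  unfolding expect_def finner_def x1op_def Ep_def Em_def
  by (simp add: sum_divide_distrib sum.distrib[symmetric] algebra_simps)

lemma expect_x2: "expect n (x2op n k) w = (Ep n k w - Em n k w) / (2 * \<i>)"
  unfolding expect_def finner_def x2op_def Ep_def Em_def
  by (simp add: sum_divide_distrib sum_subtractf[symmetric] algebra_simps)

lemma sq_id: "((p + q) / 2) ^ 2 + ((p - q) / (2 * \<i>)) ^ 2 = p * (q :: complex)"
  by (simp add: field_simps power2_eq_square)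

lemma varx_eq: "varx n k w = expect n (xsqop n k) w - Ep n k w * Em n k w"
  unfolding varx_def expect_x1 expect_x2 using sq_id[of "Ep n k w" "Em n k w"]
  by (simp add: algebra_simps)


lemma shift_sum:
  fixes f :: "int \<Rightarrow> 'a::comm_monoid_add"
  assumes "f (- int n) = 0" "f (int n + 1) = 0"
  shows "(\<Sum>m\<in>R n. f (m + 1)) = (\<Sum>m\<in>R n. f m)"
proof -
  have "(\<Sum>m\<in>R n. f (m + 1)) = (\<Sum>m\<in>{- int n + 1..int n + 1}. f m)"
    by (rule sum.reindex_bij_witness[of _ "\<lambda>m. m - 1" "\<lambda>m. m + 1"]) auto
  also have "\<dots> = (\<Sum>m\<in>{- int n..int n + 1}. f m)"
  proof (rule sum.mono_neutral_left)
    show "\<forall>i\<in>{- int n..int n + 1} - {- int n + 1..int n + 1}. f i = 0"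
    proof
      fix i assume "i \<in> {- int n..int n + 1} - {- int n + 1..int n + 1}"
      then have "i = - int n" by auto
      then show "f i = 0" using assms by simp
    qed
  qed auto
  also have "\<dots> = (\<Sum>m\<in>R n. f m)"
  proof (rule sum.mono_neutral_right)
    show "\<forall>i\<in>{- int n..int n + 1} - R n. f i = 0"
    proof
      fix i assume "i \<in> {- int n..int n + 1} - R n"
      then have "i = int n + 1" by auto
      then show "f i = 0" using assms by simp
    qed
  qed auto
  finally show ?thesis .
qed

abbreviation "th a b m \<equiv> a * real_of_int m + b m"

lemma Ep_om: "Ep n k (omega n a b) = (\<Sum>m\<in>R n. complex_of_real (bb n k m) * cis (th a b (m - 1) - th a b m)) / of_real (2 * real n + 1)"
  unfolding Ep_def finner_def xplus_def sum_divide_distrib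
proof (rule sum.cong[OF refl])
  fix m assume m: "m \<in> R n"
  show "cnj (omega n a b m) * (bcoef n k m * omega n a b (m - 1)) =
         complex_of_real (bb n k m) * cis (th a b (m - 1) - th a b m) / of_real (2 * real n + 1)"
  proof (cases "m = - int n")
    case True then show ?thesis by (simp add: bcoef_bb bb_def)
  next
    case False
    then have m1: "m - 1 \<in> R n" using m by auto
    have "cnj (omega n a b m) * (bcoef n k m * omega n a b (m - 1)) = bcoef n k m * (cnj (omega n a b m) * omega n a b (m - 1))"
      by (simp only: mult_ac)
    then show ?thesis by (simp only: om_prod[OF m m1] bcoef_bb times_divide_eq_right)
  qed
qed

lemma Em_om: "Em n k (omega n a b) = (\<Sum>m\<in>R n. complex_of_real (bb n k (m + 1)) * cis (th a b (m + 1) - th a b m)) / of_real (2 * real n + 1)"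
  unfolding Em_def finner_def xminus_def sum_divide_distrib
proof (rule sum.cong[OF refl])
  fix m assume m: "m \<in> R n"
  show "cnj (omega n a b m) * (bcoef n k (m + 1) * omega n a b (m + 1)) =
         complex_of_real (bb n k (m + 1)) * cis (th a b (m + 1) - th a b m) / of_real (2 * real n + 1)"
  proof (cases "m = int n")
    case True then show ?thesis by (simp add: bcoef_bb bb_def)
  next
    case False
    then have m1: "m + 1 \<in> R n" using m by auto
    have "cnj (omega n a b m) * (bcoef n k (m + 1) * omega n a b (m + 1)) = bcoef n k (m + 1) * (cnj (omega n a b m) * omega n a b (m + 1))"
      by (simp only: mult_ac)
    then show ?thesis by (simp only: om_prod[OF m m1] bcoef_bb times_divide_eq_right)
  qed
qed

lemma Em_cnj: "Em n k (omega n a b) = cnj (Ep n k (omega n a b))"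
proof -
  define G where "G m = complex_of_real (bb n k m) * cis (th a b m - th a b (m - 1))" for m
  have "cnj (Ep n k (omega n a b)) = (\<Sum>m\<in>R n. G m) / of_real (2 * real n + 1)"
    unfolding Ep_om G_def by (simp add: cis_cnj)
  also have "(\<Sum>m\<in>R n. G m) = (\<Sum>m\<in>R n. G (m + 1))"
    by (rule shift_sum[symmetric]) (simp_all add: G_def bb_def)
  finally show ?thesis unfolding Em_om G_def by simp
qed


lemma bb_out: "bb n k (- int n) = 0" "bb n k (int n + 1) = 0"
  by (simp_all add: bb_def)

lemma Exsq_om: "expect n (xsqop n k) (omega n a b) = complex_of_real ((\<Sum>m\<in>R n. bb n k m ^ 2) / (2 * real n + 1))"
proof -
  have "expect n (xsqop n k) (omega n a b) = (\<Sum>m\<in>R n. complex_of_real ((bb n k m ^ 2 + bb n k (m + 1) ^ 2) / 2) / complex_of_real (2 * real n + 1))"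
    unfolding expect_def finner_def xsq_eq
    by (rule sum.cong[OF refl]) (simp only: om_sq' bcoef_bb of_real_power of_real_add of_real_divide of_real_numeral)
  also have "\<dots> = complex_of_real ((\<Sum>m\<in>R n. (bb n k m ^ 2 + bb n k (m + 1) ^ 2) / 2) / (2 * real n + 1))"
    by (simp only: of_real_sum of_real_divide sum_divide_distrib)
  also have "(\<Sum>m\<in>R n. (bb n k m ^ 2 + bb n k (m + 1) ^ 2) / 2) = (\<Sum>m\<in>R n. bb n k m ^ 2)"
  proof -
    have "(\<Sum>m\<in>R n. bb n k (m + 1) ^ 2) = (\<Sum>m\<in>R n. bb n k m ^ 2)"
      by (rule shift_sum) (simp_all add: bb_out)
    then show ?thesis by (simp add: sum.distrib sum_divide_distrib[symmetric])
  qed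
  finally show ?thesis .
qed

lemma mm1_nonneg: "0 \<le> (m::int) * (m - 1)"
proof (cases "m \<le> 0")
  case True then show ?thesis by (simp add: mult_nonpos_nonpos)
next
  case False then show ?thesis by simp
qed

lemma sum_mm1: "(\<Sum>m\<in>R n. real_of_int (m * (m - 1))) = real n * (real n + 1) * (2 * real n + 1) / 3"
proof -
  have "(\<Sum>m\<in>R n. m * (m - 1)) = (\<Sum>m\<in>R n. m^2) - (\<Sum>m\<in>R n. m)"
    by (simp add: sum_subtractf[symmetric] algebra_simps power2_eq_square)
  then have "3 * (\<Sum>m\<in>R n. m * (m - 1)) = int n * (int n + 1) * (2 * int n + 1)"
    using sum_sq_sym[of n] sum_id_sym[of n] by simp
  then have "3 * real_of_int (\<Sum>m\<in>R n. m * (m - 1)) = real n * (real n + 1) * (2 * real n + 1)"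
    by (metis (mono_tags, lifting) of_int_mult of_int_numeral of_int_of_nat_eq of_int_add of_int_1)
  then show ?thesis by (simp only: of_int_sum[symmetric])
qed

lemma Q_eq:
  assumes k: "k > 0"
  shows "(\<Sum>m\<in>R n. bb n k m ^ 2) = 2 * real n + real n * (real n + 1) * (2 * real n + 1) / (3 * k) - real n * (real n + 1) / k"
proof -
  define h where "h m = 1 + real_of_int (m * (m - 1)) / k" for m
  have pt: "bb n k m ^ 2 = h m - (if m = - int n then h m else 0)" if "m \<in> R n" for m
  proof -
    have "0 \<le> real_of_int (m * (m - 1)) / k" proof (rule divide_nonneg_pos)
      show "0 \<le> real_of_int (m * (m - 1))" using mm1_nonneg[of m] by (simp only: of_int_0_le_iff)
    qed (rule k)
    then have "0 \<le> h m" unfolding h_def by linarith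
    then show ?thesis using that unfolding bb_def h_def[symmetric] by auto
  qed
  have "(\<Sum>m\<in>R n. bb n k m ^ 2) = (\<Sum>m\<in>R n. h m) - (\<Sum>m\<in>R n. if m = - int n then h m else 0)"
    by (simp add: pt sum_subtractf)
  also have "(\<Sum>m\<in>R n. if m = - int n then h m else 0) = h (- int n)"
    by (simp add: sum.delta)
  also have "(\<Sum>m\<in>R n. h m) = (2 * real n + 1) + real n * (real n + 1) * (2 * real n + 1) / (3 * k)"
    unfolding h_def sum.distrib sum_divide_distrib[symmetric] sum_mm1 by simp
  also have "h (- int n) = 1 + real n * (real n + 1) / k"
    unfolding h_def by (simp add: algebra_simps)
  finally show ?thesis by simp
qed



lemma h_nonneg: "k > 0 \<Longrightarrow> 0 \<le> real_of_int (m * (m - 1)) / k"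
proof (rule divide_nonneg_pos)
  show "0 \<le> real_of_int (m * (m - 1))" using mm1_nonneg[of m] by (simp only: of_int_0_le_iff)
qed

lemma bb_nonneg: "k > 0 \<Longrightarrow> 0 \<le> bb n k m"
  using h_nonneg[of k m] by (simp add: bb_def)

lemma nN: "norm (complex_of_real (2 * real n + 1)) = 2 * real n + 1"
  by (simp only: norm_of_real)

lemma Re_varx:
  "Re (varx n k (omega n a b)) = (\<Sum>m\<in>R n. bb n k m ^ 2) / (2 * real n + 1) - norm (Ep n k (omega n a b)) ^ 2"
proof -
  have "varx n k (omega n a b) = complex_of_real ((\<Sum>m\<in>R n. bb n k m ^ 2) / (2 * real n + 1)) - complex_of_real (norm (Ep n k (omega n a b)) ^ 2)"
  proof -
    have "Ep n k (omega n a b) * cnj (Ep n k (omega n a b)) = complex_of_real (norm (Ep n k (omega n a b)) ^ 2)"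
      by (rule complex_norm_square[symmetric])
    then show ?thesis unfolding varx_eq Exsq_om Em_cnj by simp
  qed
  then show ?thesis by simp
qed

lemma Ep_norm_le: "norm (Ep n k (omega n a b)) \<le> (\<Sum>m\<in>R n. bb n k m) / (2 * real n + 1)" if "k > 0"
proof -
  have "norm (\<Sum>m\<in>R n. complex_of_real (bb n k m) * cis (th a b (m - 1) - th a b m)) \<le> (\<Sum>m\<in>R n. norm (complex_of_real (bb n k m) * cis (th a b (m - 1) - th a b m)))"
    by (rule norm_sum)
  also have "\<dots> = (\<Sum>m\<in>R n. bb n k m)"
    by (rule sum.cong[OF refl]) (simp add: norm_mult bb_nonneg that)
  finally show ?thesis unfolding Ep_om norm_divide nN by (simp add: divide_right_mono)
qed

lemma Ep0_norm: "norm (Ep n k (omega n a (\<lambda>_. 0))) = (\<Sum>m\<in>R n. bb n k m) / (2 * real n + 1)" if "k > 0"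
proof -
  have "Ep n k (omega n a (\<lambda>_. 0)) = (\<Sum>m\<in>R n. complex_of_real (bb n k m) * cis (- a)) / of_real (2 * real n + 1)"
    unfolding Ep_om by (simp add: algebra_simps)
  also have "\<dots> = complex_of_real (\<Sum>m\<in>R n. bb n k m) * cis (- a) / of_real (2 * real n + 1)"
    by (simp add: sum_distrib_right)
  finally have e: "Ep n k (omega n a (\<lambda>_. 0)) = complex_of_real (\<Sum>m\<in>R n. bb n k m) * cis (- a) / of_real (2 * real n + 1)" .
  have "0 \<le> (\<Sum>m\<in>R n. bb n k m)" using that by (simp add: sum_nonneg bb_nonneg)
  then show ?thesis unfolding e norm_divide norm_mult nN norm_cis norm_of_real by simp
qed

lemma S_ge:
  assumes k: "k > 0"
  shows "2 * real n \<le> (\<Sum>m\<in>R n. bb n k m)"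
proof -
  have "(\<Sum>m\<in>R n. (if m = - int n then 0 else 1)) \<le> (\<Sum>m\<in>R n. bb n k m)"
  proof (rule sum_mono)
    fix m assume m: "m \<in> R n"
    show "(if m = - int n then 0 else 1) \<le> bb n k m"
    proof (cases "m = - int n")
      case True then show ?thesis by (simp add: bb_nonneg k)
    next
      case False
      have "0 \<le> real_of_int (m * (m - 1)) / k"
      proof (rule divide_nonneg_pos)
        show "0 \<le> real_of_int (m * (m - 1))" using mm1_nonneg[of m] by (simp only: of_int_0_le_iff)
      qed (rule k)
      then have "1 \<le> sqrt (1 + real_of_int (m * (m - 1)) / k)" by simp
      then show ?thesis using False m by (simp add: bb_def)
    qed
  qed
  moreover have "(\<Sum>m\<in>R n. (if m = - int n then 0 else 1)) = (2 * real n :: real)"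
  proof -
    have "(\<Sum>m\<in>R n. (if m = - int n then 0 else 1)) = (\<Sum>m\<in>R n. (1::real)) - (\<Sum>m\<in>R n. if m = - int n then 1 else 0)"
      by (subst sum_subtractf[symmetric]) (rule sum.cong, auto)
    also have "\<dots> = 2 * real n"
    proof -
      have "card (R n) = 2 * n + 1" by simp
      then show ?thesis by (simp add: sum.delta)
    qed
    finally show ?thesis .
  qed
  ultimately show ?thesis by simp
qed



lemma t5_eq:
  fixes x y z :: real
  assumes x: "x \<noteq> 0" and y: "y \<noteq> 0" and z: "z \<noteq> 0" and ye: "y = x + 1" and ze: "z = 2 * x + 1"
  shows "(2 * x + 2 * (x - 1) / (3 * x * y)) / z - (2 * x / z)^2
        = (12*x^3 + 20*x^2 - 4*x - 4) / (6 * x * y * z^2)"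
proof -
  have "(2 * x + 2 * (x - 1) / (3 * x * y)) / z - (2 * x / z)^2
        = (2 * ((6 * x^2 * y + 2 * (x - 1)) * z - 12 * x^3 * y)) / (6 * x * y * z^2)"
    using x y z by (simp add: field_simps power2_eq_square power3_eq_cube)
  also have "2 * ((6 * x^2 * y + 2 * (x - 1)) * z - 12 * x^3 * y) = 12*x^3 + 20*x^2 - 4*x - 4"
    unfolding ye ze by (simp add: algebra_simps power2_eq_square power3_eq_cube)
  finally show ?thesis .
qed

lemma t5_eq2:
  fixes x y z :: real
  assumes x: "x \<noteq> 0" and y: "y \<noteq> 0" and z: "z \<noteq> 0" and ye: "y = x + 1" and ze: "z = 2 * x + 1"
  shows "(12*x^3 + 20*x^2 + 11*x + 2) / (6 * x * y * z^2) = 1 / y * (1 / 2 + 1 / (3 * x))"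
proof -
  have "12*x^3 + 20*x^2 + 11*x + 2 = (3 * x + 2) * z^2"
    unfolding ze by (simp add: algebra_simps power2_eq_square power3_eq_cube)
  then show ?thesis using x y z by (simp add: field_simps power2_eq_square)
qed

lemma num_bound:
  fixes x k S :: real
  assumes x: "x \<ge> 1" and k: "k \<ge> x^2 * (x+1)^2" and S: "S \<ge> 2 * x"
  shows "(2 * x + x * (x + 1) * (2 * x + 1) / (3 * k) - x * (x + 1) / k) / (2 * x + 1) - (S / (2 * x + 1))^2
         < 1 / (x + 1) * (1 / 2 + 1 / (3 * x))"
proof -
  have "0 < x^2 * (x+1)^2" using x by (intro mult_pos_pos) auto
  with k have kpos: "k > 0" by linarith
  have t1: "x * (x + 1) * (2 * x + 1) / (3 * k) - x * (x + 1) / k = 2 * x * (x + 1) * (x - 1) / (3 * k)"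
    using kpos by (simp add: field_simps)
  have t2: "2 * x * (x + 1) * (x - 1) / (3 * k) \<le> 2 * x * (x + 1) * (x - 1) / (3 * (x^2 * (x+1)^2))"
    by (rule divide_left_mono) (use x k kpos in \<open>auto intro!: mult_nonneg_nonneg mult_pos_pos\<close>)
  have t3: "2 * x * (x + 1) * (x - 1) / (3 * (x^2 * (x+1)^2)) = 2 * (x - 1) / (3 * x * (x + 1))"
  proof -
    have nz: "x * (x + 1) \<noteq> 0" using x by auto
    have "2 * x * (x + 1) * (x - 1) = (2 * (x - 1)) * (x * (x + 1))" by (simp add: algebra_simps)
    moreover have "3 * (x^2 * (x+1)^2) = (3 * x * (x + 1)) * (x * (x + 1))" by (simp add: algebra_simps power2_eq_square)
    ultimately show ?thesis using nonzero_mult_divide_mult_cancel_right[OF nz] by simp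
  qed
  have t4: "(2 * x / (2 * x + 1))^2 \<le> (S / (2 * x + 1))^2"
    by (rule power_mono) (use x S in \<open>auto intro: divide_right_mono\<close>)
  have t5: "(2 * x + 2 * (x - 1) / (3 * x * (x + 1))) / (2 * x + 1) - (2 * x / (2 * x + 1))^2
         < 1 / (x + 1) * (1 / 2 + 1 / (3 * x))"
  proof -
    have "(2 * x + 2 * (x - 1) / (3 * x * (x + 1))) / (2 * x + 1) - (2 * x / (2 * x + 1))^2
        = (12*x^3 + 20*x^2 - 4*x - 4) / (6 * x * (x + 1) * (2 * x + 1)^2)"
      by (rule t5_eq) (use x in auto)
    also have "\<dots> < (12*x^3 + 20*x^2 + 11*x + 2) / (6 * x * (x + 1) * (2 * x + 1)^2)"
      by (rule divide_strict_right_mono) (use x in \<open>auto intro!: mult_pos_pos\<close>)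
    also have "\<dots> = 1 / (x + 1) * (1 / 2 + 1 / (3 * x))"
      by (rule t5_eq2) (use x in auto)
    finally show ?thesis .
  qed
  have "(2 * x + x * (x + 1) * (2 * x + 1) / (3 * k) - x * (x + 1) / k) / (2 * x + 1)
      \<le> (2 * x + 2 * (x - 1) / (3 * x * (x + 1))) / (2 * x + 1)"
    by (rule divide_right_mono) (use t1 t2 t3 x in auto)
  then show ?thesis using t4 t5 by linarith
qed


theorem mainTheorem5:
  fixes Lam :: nat and k :: real
  assumes "1 \<le> Lam"
    and "k \<ge> real Lam ^ 2 * (real Lam + 1) ^ 2"
  shows
    "(\<forall>\<beta> :: int \<Rightarrow> real. \<forall>v \<in> hspace Lam. \<forall>m :: int.
        ((\<lambda>\<alpha>. complex_of_real ((2 * real Lam + 1) / (2 * pi)) * Pproj Lam \<alpha> \<beta> v m)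
           has_integral v m) {0..2 * pi})
   \<and> (\<forall>\<alpha> \<in> {0..<2 * pi}. \<forall>\<beta> :: int \<Rightarrow> real.
        expect Lam Lop (omega Lam \<alpha> \<beta>) = 0
        \<and> varL Lam (omega Lam \<alpha> \<beta>) = of_real (real Lam * (real Lam + 1) / 3))
   \<and> (\<forall>\<alpha> \<in> {0..<2 * pi}. \<forall>\<beta> :: int \<Rightarrow> real.
        Re (varx Lam k (omega Lam \<alpha> \<beta>)) \<ge> Re (varx Lam k (omega Lam \<alpha> (\<lambda>_. 0))))
   \<and> (\<forall>\<alpha> \<in> {0..<2 * pi}.
        Re (varx Lam k (omega Lam \<alpha> (\<lambda>_. 0)))
          < 1 / (real Lam + 1) * (1 / 2 + 1 / (3 * real Lam)))
   \<and> (Lam \<ge> 2 \<longrightarrow>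
        1 / (real Lam + 1) * (1 / 2 + 1 / (3 * real Lam)) \<le> 2 / (3 * (real Lam + 1)))"
  proof -
  let ?x = "real Lam"
  have "0 < ?x^2 * (?x+1)^2" using assms(1) by (intro mult_pos_pos) auto
  with assms(2) have kpos: "k > 0" by linarith
  have c1: "\<forall>\<beta> :: int \<Rightarrow> real. \<forall>v \<in> hspace Lam. \<forall>m :: int.
        ((\<lambda>\<alpha>. complex_of_real ((2 * real Lam + 1) / (2 * pi)) * Pproj Lam \<alpha> \<beta> v m)
           has_integral v m) {0..2 * pi}"
    using part1 by blast
  have c2: "\<forall>\<alpha> \<in> {0..<2 * pi}. \<forall>\<beta> :: int \<Rightarrow> real.
        expect Lam Lop (omega Lam \<alpha> \<beta>) = 0
        \<and> varL Lam (omega Lam \<alpha> \<beta>) = of_real (real Lam * (real Lam + 1) / 3)"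
    using expect_L varL_om by blast
  have c3: "Re (varx Lam k (omega Lam \<alpha> \<beta>)) \<ge> Re (varx Lam k (omega Lam \<alpha> (\<lambda>_. 0)))" for \<alpha> \<beta>
  proof -
    have "norm (Ep Lam k (omega Lam \<alpha> \<beta>)) ^ 2 \<le> norm (Ep Lam k (omega Lam \<alpha> (\<lambda>_. 0))) ^ 2"
      by (rule power_mono) (simp_all only: Ep0_norm[OF kpos] Ep_norm_le[OF kpos] norm_ge_zero)
    then show ?thesis unfolding Re_varx by linarith
  qed
  have c4: "Re (varx Lam k (omega Lam \<alpha> (\<lambda>_. 0)))
          < 1 / (real Lam + 1) * (1 / 2 + 1 / (3 * real Lam))" for \<alpha>
    unfolding Re_varx Ep0_norm[OF kpos] Q_eq[OF kpos]
    by (rule num_bound) (use assms S_ge[OF kpos, of Lam] in auto)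
  have c5: "1 / (real Lam + 1) * (1 / 2 + 1 / (3 * real Lam)) \<le> 2 / (3 * (real Lam + 1))" if "Lam \<ge> 2"
  proof -
    have "1 / (3 * real Lam) \<le> 1 / 6" using that by (simp add: field_simps)
    then have "1 / 2 + 1 / (3 * real Lam) \<le> 2 / 3" by linarith
    then have "1 / (real Lam + 1) * (1 / 2 + 1 / (3 * real Lam)) \<le> 1 / (real Lam + 1) * (2 / 3)"
      by (rule mult_left_mono) simp
    moreover have "1 / (real Lam + 1) * (2 / 3) = 2 / (3 * (real Lam + 1))" by simp
    ultimately show ?thesis by (rule ord_le_eq_trans)
  qed
  show ?thesis using c1 c2 c3 c4 c5 by blast
qed

end
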